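(* The language $\{\,a^mb^{2^m}\mid m\ge1\,\}$ belongs to $\mathscr{L}_{rt}(\mathrm{SC\text{-}OCA}(n))$, i.e., it is accepted by a real-time one-way cellular automaton whose total number of communications on accepted inputs $w$ is $O(|w|)$.
   Context: A CA is $\langle S,F,A,B,\#,b_l,b_r,\delta\rangle$ with states $S$, accepting states $F$, input alphabet $A\subseteq S$, communication symbols $B$, boundary $\#\notin B$, communication functions $b_l,b_r:S\to B\cup\{\bot\}$ ($\bot$: nothing sent), local transition $\delta:(B\cup\{\#,\bot\})\times S\times(B\cup\{\#,\bot\})\to S$; cells $1..|w|$ start with the input letters and update synchronously by $c_{t+1}(i)=\delta(b_r(c_t(i-1)),c_t(i),b_l(c_t(i+1)))$, outer cells getting $\#$ once at the first step and $\bot$ afterwards. Acceptance: leftmost cell enters $F$. Real time: accepted inputs accepted within $|w|$ steps. OCA: $b_r\equiv\bot$ and the leftmost cell gets no boundary symbol. $\mathrm{com}(i,t)$: number of steps $j<t$ with $b_r(c_j(i))\ne\bot$ or $b_l(c_j(i+1))\ne\bot$; $\mathrm{scom}(w)=\sum_{i=1}^{|w|-1}\mathrm{com}(i,t(|w|))$ with $t$ the time complexity. $\mathrm{SC\text{-}OCA}(f)$: OCAs such that every accepted $w$ is accepted with $\mathrm{scom}(w)\le g(|w|)$ for some $g\in O(f)$. *)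

theory Defs
  imports Main "HOL-Library.Landau_Symbols"
begin

(* Symbols a cell can receive from a neighbour: a communication symbol,
   the boundary symbol #, or nothing (bottom). *)
datatype 'b msg = Sym 'b | Bnd | Bot

(* A cellular automaton <S,F,A,B,#,b_l,b_r,delta>; None encodes "bottom" (nothing sent). *)
record ('s, 'b) ca =
  states    :: "'s set"
  accepting :: "'s set"
  inputs    :: "'s set"
  comms     :: "'b set"
  bl        :: "'s \<Rightarrow> 'b option"
  br        :: "'s \<Rightarrow> 'b option"
  delta     :: "'b msg \<Rightarrow> 's \<Rightarrow> 'b msg \<Rightarrow> 's"

definition valid_msg :: "'b set \<Rightarrow> 'b msg \<Rightarrow> bool" where
  "valid_msg B m \<longleftrightarrow> (case m of Sym b \<Rightarrow> b \<in> B | _ \<Rightarrow> True)"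

definition wf_ca :: "('s, 'b) ca \<Rightarrow> bool" where
  "wf_ca M \<longleftrightarrow> finite (states M) \<and> accepting M \<subseteq> states M \<and> inputs M \<subseteq> states M
     \<and> finite (comms M)
     \<and> (\<forall>s\<in>states M. bl M s \<in> Some ` comms M \<union> {None})
     \<and> (\<forall>s\<in>states M. br M s \<in> Some ` comms M \<union> {None})
     \<and> (\<forall>x s y. valid_msg (comms M) x \<longrightarrow> s \<in> states M \<longrightarrow> valid_msg (comms M) y
              \<longrightarrow> delta M x s y \<in> states M)"

definition to_msg :: "'b option \<Rightarrow> 'b msg" where
  "to_msg o' = (case o' of None \<Rightarrow> Bot | Some b \<Rightarrow> Sym b)"

definition is_oca :: "('s, 'b) ca \<Rightarrow> bool" where
  "is_oca M \<longleftrightarrow> wf_ca M \<and> (\<forall>s. br M s = None)"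

(* Configuration of an OCA at time t on input w; cells are 1..|w|. *)
fun oca_conf :: "('s, 'b) ca \<Rightarrow> 's list \<Rightarrow> nat \<Rightarrow> nat \<Rightarrow> 's" where
  "oca_conf M w 0 i = w ! (i - 1)"
| "oca_conf M w (Suc t) i =
     delta M
       (if i = 1 then Bot else to_msg (br M (oca_conf M w t (i - 1))))
       (oca_conf M w t i)
       (if i = length w then (if t = 0 then Bnd else Bot)
        else to_msg (bl M (oca_conf M w t (i + 1))))"

definition rt_lang :: "('s, 'b) ca \<Rightarrow> 's list set" where
  "rt_lang M = {w. w \<noteq> [] \<and> set w \<subseteq> inputs M \<and>
                   (\<exists>t\<le>length w. oca_conf M w t 1 \<in> accepting M)}"

definition com :: "('s, 'b) ca \<Rightarrow> 's list \<Rightarrow> nat \<Rightarrow> nat \<Rightarrow> nat" where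
  "com M w i t = card {j. j < t \<and> (br M (oca_conf M w j i) \<noteq> None
                                    \<or> bl M (oca_conf M w j (i + 1)) \<noteq> None)}"

definition scom_rt :: "('s, 'b) ca \<Rightarrow> 's list \<Rightarrow> nat" where
  "scom_rt M w = (\<Sum>i=1..length w - 1. com M w i (length w))"

definition rt_SC_OCA :: "(nat \<Rightarrow> real) \<Rightarrow> ('s, 'b) ca \<Rightarrow> bool" where
  "rt_SC_OCA f M \<longleftrightarrow> is_oca M \<and>
     (\<exists>g. g \<in> O(f) \<and> (\<forall>w\<in>rt_lang M. real (scom_rt M w) \<le> g (length w)))"

end

theory Submission
  imports Defs "HOL-Library.Countable"
begin

lemma odd_Suc_div: "odd (Suc x div 2^d) = (odd (x div 2^d) \<noteq> (2^d dvd Suc x))"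
proof (cases "2^d dvd Suc x")
  case False
  then have "Suc x mod 2^d \<noteq> 0" by (simp add: dvd_eq_mod_eq_0)
  with False show ?thesis by (simp add: div_Suc)
qed (auto simp: div_Suc dvd_imp_mod_0)

lemma dvd_Suc_pow: "(2^(Suc d) dvd Suc x) = (odd (x div (2::nat)^d) \<and> 2^d dvd Suc x)"
proof (cases "2^d dvd Suc x")
  case True
  then obtain k where k: "Suc x = 2^d * k" by blast
  then have "k \<ge> 1" by (cases k) auto
  have "x div 2^d = k - 1"
  proof -
    have "x = 2^d * (k - 1) + (2^d - 1)" using k \<open>k\<ge>1\<close>
      by (cases k) (auto simp: algebra_simps)
    moreover have "(2::nat)^d - 1 < 2^d" by simp
    ultimately show ?thesis by (metis div_mult_self2 div_less add_0 mult.commute power_not_zero zero_neq_numeral div_add_self1 add.commute div_mult_self1)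
  qed
  moreover have "2^(Suc d) dvd Suc x \<longleftrightarrow> even k" using k by auto
  ultimately show ?thesis using True \<open>k\<ge>1\<close> by (cases k) auto
next
  case False
  then show ?thesis using dvd_mult_left power_Suc by (metis mult.commute)
qed

datatype Msg = LA | LB | MC bool bool | MD
datatype St = InA | InB | Dead | RA bool bool bool bool bool bool bool | RB bool

fun blS :: "St \<Rightarrow> Msg option" where
  "blS InA = Some LA"
| "blS InB = Some LB"
| "blS Dead = Some MD"
| "blS (RA l b c s en es acc) = (if c \<or> en then Some (MC c en) else None)"
| "blS (RB en) = (if en then Some (MC False en) else None)"

definition raStep :: "bool \<Rightarrow> bool \<Rightarrow> bool \<Rightarrow> bool \<Rightarrow> bool \<Rightarrow> bool \<Rightarrow> bool \<Rightarrow> St" where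
  "raStep l b c s es c' e = (let es' = es \<or> e; inc = (if l then \<not> es' else c')
     in RA l (b \<noteq> inc) (b \<and> inc) (s \<or> c) e es' (e \<and> c \<and> \<not> s))"

fun stepS :: "Msg msg \<Rightarrow> St \<Rightarrow> St" where
  "stepS r InA = (case r of Sym LB \<Rightarrow> RA True True False False False False False
                  | Sym LA \<Rightarrow> RA False False False False False False False | _ \<Rightarrow> Dead)"
| "stepS r InB = (case r of Sym LB \<Rightarrow> RB False | Bnd \<Rightarrow> RB True | _ \<Rightarrow> Dead)"
| "stepS r Dead = Dead"
| "stepS r (RA l b c s en es acc) = (case r of Sym (MC c' e) \<Rightarrow> raStep l b c s es c' e
                  | Bot \<Rightarrow> raStep l b c s es False False | _ \<Rightarrow> Dead)"
| "stepS r (RB en) = (case r of Sym (MC c' e) \<Rightarrow> RB e | Bot \<Rightarrow> RB False | _ \<Rightarrow> Dead)"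

fun confS :: "St list \<Rightarrow> nat \<Rightarrow> nat \<Rightarrow> St" where
  "confS w 0 i = w ! (i - 1)"
| "confS w (Suc t) i = stepS
     (if i = length w then (if t = 0 then Bnd else Bot) else to_msg (blS (confS w t (i + 1))))
     (confS w t i)"

definition coutF :: "nat \<Rightarrow> nat \<Rightarrow> nat \<Rightarrow> bool" where
  "coutF N d t \<longleftrightarrow> d < t \<and> t \<le> N + d \<and> 2^(Suc d) dvd (t - d)"
definition seenF :: "nat \<Rightarrow> nat \<Rightarrow> nat \<Rightarrow> bool" where
  "seenF N d t \<longleftrightarrow> 2^(Suc d) \<le> N \<and> 2^(Suc d) + d < t"
definition bitF :: "nat \<Rightarrow> nat \<Rightarrow> nat \<Rightarrow> bool" where
  "bitF N d t \<longleftrightarrow> odd (min (t - d) N div 2^d)"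

definition ideal :: "nat \<Rightarrow> nat \<Rightarrow> nat \<Rightarrow> nat \<Rightarrow> St" where
  "ideal m N t i = (if i \<le> m then RA (i = m) (bitF N (m-i) t) (coutF N (m-i) t) (seenF N (m-i) t)
      (t = m+N+1-i) (m+N+1-i \<le> t)
      (2 \<le> t \<and> t = m+N+1-i \<and> coutF N (m-i) (t-1) \<and> \<not> seenF N (m-i) (t-1))
    else RB (t = m+N+1-i))"

lemma seen_step: "seenF N d (Suc t) = (seenF N d t \<or> coutF N d t)"
proof
  assume h: "seenF N d (Suc t)"
  show "seenF N d t \<or> coutF N d t"
  proof (cases "2^(Suc d) + d < t")
    case True then show ?thesis using h unfolding seenF_def by simp
  next
    case False
    then have "t = 2^(Suc d) + d" using h unfolding seenF_def by simp
    then have "coutF N d t" using h unfolding seenF_def coutF_def by simp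
    then show ?thesis by simp
  qed
next
  assume h: "seenF N d t \<or> coutF N d t"
  show "seenF N d (Suc t)"
  proof (cases "coutF N d t")
    case True
    then have a: "d < t" "t \<le> N + d" "2^(Suc d) dvd (t - d)" unfolding coutF_def by auto
    then have "2^(Suc d) \<le> t - d" by (intro dvd_imp_le) auto
    then show ?thesis using a unfolding seenF_def by linarith
  next
    case False
    then show ?thesis using h unfolding seenF_def by simp
  qed
qed

lemma step_deep:
  assumes "d \<ge> 1"
  shows "bitF N d (Suc t) = (bitF N d t \<noteq> coutF N (d-1) t)"
    and "coutF N d (Suc t) = (bitF N d t \<and> coutF N (d-1) t)"
proof -
  obtain e where e: "d = Suc e" using assms by (cases d) auto
  have "bitF N d (Suc t) = (bitF N d t \<noteq> coutF N (d-1) t) \<and>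
        coutF N d (Suc t) = (bitF N d t \<and> coutF N (d-1) t)"
  proof (cases "t < d")
    case True
    then show ?thesis unfolding bitF_def coutF_def e by auto
  next
    case False
    define x where "x = t - d"
    have t: "t = x + d" using False x_def by auto
    have st: "Suc t - d = Suc x" using t by simp
    have c: "coutF N (d-1) t = (Suc x \<le> N \<and> 2^d dvd Suc x)"
      unfolding coutF_def e t by auto
    have c2: "coutF N d (Suc t) = (Suc x \<le> N \<and> 2^(Suc d) dvd Suc x)"
      unfolding coutF_def t by auto
    show ?thesis
    proof (cases "Suc x \<le> N")
      case True
      then have "min (Suc x) N = Suc x" "min x N = x" by auto
      then show ?thesis unfolding c c2 bitF_def st using True dvd_Suc_pow[of d x]
        by (simp add: odd_Suc_div t del: power_Suc)
    next
      case False
      then have "min (Suc x) N = N" "min x N = N" by auto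
      then show ?thesis unfolding c c2 bitF_def st using False by (simp add: t)
    qed
  qed
  then show "bitF N d (Suc t) = (bitF N d t \<noteq> coutF N (d-1) t)"
    and "coutF N d (Suc t) = (bitF N d t \<and> coutF N (d-1) t)" by auto
qed

lemma step_last:
  shows "bitF N 0 (Suc t) = (bitF N 0 t \<noteq> (Suc t \<le> N))"
    and "coutF N 0 (Suc t) = (bitF N 0 t \<and> Suc t \<le> N)"
proof -
  show "bitF N 0 (Suc t) = (bitF N 0 t \<noteq> (Suc t \<le> N))"
    unfolding bitF_def by (cases "Suc t \<le> N") auto
  show "coutF N 0 (Suc t) = (bitF N 0 t \<and> Suc t \<le> N)"
    unfolding bitF_def coutF_def by (cases "Suc t \<le> N") auto
qed


lemma msg_case: "stepS (to_msg (if c \<or> e then Some (MC c e) else None)) (RA l b c0 s en es acc)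
   = raStep l b c0 s es c e"
  by (auto simp: to_msg_def)

lemma w_nth:
  assumes "1 \<le> i" "i \<le> m + N"
  shows "(replicate m InA @ replicate N InB) ! (i - 1) = (if i \<le> m then InA else InB)"
  using assms by (auto simp: nth_append)

lemma conf_ideal:
  assumes m: "m \<ge> 1" and N: "N \<ge> 1"
  shows "1 \<le> i \<Longrightarrow> i \<le> m + N \<Longrightarrow>
    confS (replicate m InA @ replicate N InB) (Suc t) i = ideal m N (Suc t) i"
proof (induction t arbitrary: i)
  case 0
  let ?w = "replicate m InA @ replicate N InB"
  have len: "length ?w = m + N" by simp
  show ?case
  proof (cases "i = m + N")
    case True
    then show ?thesis using 0 m N w_nth[of i m N] len
      by (simp add: ideal_def)
  next
    case False
    then have nb: "?w ! i = (if i + 1 \<le> m then InA else InB)"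
      using w_nth[of "i+1" m N] 0 by simp
    show ?thesis
    proof (cases "i < m")
      case True
      then have "Suc 0 \<noteq> Suc (m + N) - i \<and> \<not> Suc (m + N) - i \<le> Suc 0" using N by auto
      then show ?thesis using 0 False nb w_nth[of i m N] N True
        by (simp add: ideal_def to_msg_def bitF_def coutF_def seenF_def)
    next
      case F2: False
      then show ?thesis using 0 False nb w_nth[of i m N] N
        by (cases "i = m") (simp_all add: ideal_def to_msg_def bitF_def coutF_def seenF_def)
    qed
  qed
next
  case (Suc t)
  let ?w = "replicate m InA @ replicate N InB"
  have len: "length ?w = m + N" by simp
  have cur: "confS ?w (Suc t) i = ideal m N (Suc t) i" using Suc by blast
  show ?case
  proof (cases "i = m + N")
    case True
    then show ?thesis using cur m N
      by (simp add: ideal_def to_msg_def)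
  next
    case False
    have nxt: "confS ?w (Suc t) (i+1) = ideal m N (Suc t) (i+1)" using Suc False by simp
    have eq: "confS ?w (Suc (Suc t)) i = stepS (to_msg (blS (ideal m N (Suc t) (i+1)))) (ideal m N (Suc t) i)"
      using cur nxt False by simp
    show ?thesis
    proof (cases "i < m")
      case True
      define d where "d = m - i"
      have d: "m - (i+1) = d - 1" "d \<ge> 1" using True d_def by auto
      have I1: "ideal m N (Suc t) i = RA False (bitF N d (Suc t)) (coutF N d (Suc t)) (seenF N d (Suc t))
          (Suc t = m+N+1-i) (m+N+1-i \<le> Suc t)
          (2 \<le> Suc t \<and> Suc t = m+N+1-i \<and> coutF N d (Suc t - 1) \<and> \<not> seenF N d (Suc t - 1))"
        using True unfolding ideal_def d_def by simp
      have I2: "blS (ideal m N (Suc t) (i+1)) = (if coutF N (d-1) (Suc t) \<or> (Suc t = m+N+1-(i+1))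
          then Some (MC (coutF N (d-1) (Suc t)) (Suc t = m+N+1-(i+1))) else None)"
        using True d unfolding ideal_def by simp
      have I3: "ideal m N (Suc (Suc t)) i = RA False (bitF N d (Suc (Suc t))) (coutF N d (Suc (Suc t))) (seenF N d (Suc (Suc t)))
          (Suc (Suc t) = m+N+1-i) (m+N+1-i \<le> Suc (Suc t))
          (2 \<le> Suc (Suc t) \<and> Suc (Suc t) = m+N+1-i \<and> coutF N d (Suc t) \<and> \<not> seenF N d (Suc t))"
        using True unfolding ideal_def d_def by simp
      have e: "(Suc t = m+N+1-(i+1)) = (Suc (Suc t) = m+N+1-i)" using True by auto
      have e2: "(m+N+1-i \<le> Suc t \<or> Suc (Suc t) = m+N+1-i) = (m+N+1-i \<le> Suc (Suc t))" by auto
      show ?thesis unfolding eq I1 I2 I3 msg_case raStep_def Let_def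
          step_deep[OF d(2), of N "Suc t"] seen_step[of N d "Suc t"] e e2
        by simp
    next
      case F2: False
      show ?thesis
      proof (cases "i = m")
        case True
        have I1: "ideal m N (Suc t) i = RA True (bitF N 0 (Suc t)) (coutF N 0 (Suc t)) (seenF N 0 (Suc t))
            (Suc t = N+1) (N+1 \<le> Suc t)
            (2 \<le> Suc t \<and> Suc t = N+1 \<and> coutF N 0 (Suc t - 1) \<and> \<not> seenF N 0 (Suc t - 1))"
          using True unfolding ideal_def by simp
        have I2: "blS (ideal m N (Suc t) (i+1)) = (if False \<or> (Suc t = N)
            then Some (MC False (Suc t = N)) else None)"
          using True unfolding ideal_def by simp
        have I3: "ideal m N (Suc (Suc t)) i = RA True (bitF N 0 (Suc (Suc t))) (coutF N 0 (Suc (Suc t))) (seenF N 0 (Suc (Suc t)))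
            (Suc (Suc t) = N+1) (N+1 \<le> Suc (Suc t))
            (2 \<le> Suc (Suc t) \<and> Suc (Suc t) = N+1 \<and> coutF N 0 (Suc t) \<and> \<not> seenF N 0 (Suc t))"
          using True unfolding ideal_def by simp
        have e2: "(N+1 \<le> Suc t \<or> Suc t = N) = (N+1 \<le> Suc (Suc t))" by auto
        show ?thesis unfolding eq I1 I2 I3 msg_case raStep_def Let_def
            step_last[of N "Suc t"] seen_step[of N 0 "Suc t"] e2
          by auto
      next
        case False
        then show ?thesis unfolding eq using F2 Suc.prems by (auto simp: ideal_def to_msg_def)

      qed
    qed
  qed
qed


fun isAcc :: "St \<Rightarrow> bool" where
  "isAcc (RA l b c s en es acc) = acc"
| "isAcc _ = False"

lemma valid_acc:
  assumes m: "m \<ge> 1" and N: "N \<ge> 1"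
  shows "(\<exists>t \<le> m + N. isAcc (confS (replicate m InA @ replicate N InB) t 1)) \<longleftrightarrow> N = 2^m"
proof -
  let ?w = "replicate m InA @ replicate N InB"
  have acc: "isAcc (confS ?w t 1) \<longleftrightarrow> (t = m + N \<and> 2^m dvd N \<and> \<not> 2^m < N)" if "t \<le> m + N" for t
  proof (cases t)
    case 0
    then show ?thesis using m N by (simp add: nth_append)
  next
    case (Suc t')
    have "confS ?w t 1 = ideal m N t 1" using conf_ideal[OF m N, of 1 t'] Suc m by simp
    moreover have "m - 1 < m + N - 1" "m + N - 1 \<le> N + (m - 1)" "m + N - 1 - (m - 1) = N" using m N by auto
    moreover have "(2^m + (m - 1) < m + N - 1) = (2^m < N)" using m by auto
    ultimately show ?thesis using m N Suc that unfolding ideal_def coutF_def seenF_def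
      by (auto simp del: power_Suc simp add: Suc_pred[OF \<open>m \<ge> 1\<close>[unfolded One_nat_def Suc_le_eq]])
  qed
  have "(2^m dvd N \<and> \<not> 2^m < N) \<longleftrightarrow> N = 2^m"
    using N by (auto dest: dvd_imp_le)
  then show ?thesis using acc by auto
qed


lemma bcell: "w ! (i - 1) = InB \<Longrightarrow> confS w t i \<in> {InB, Dead} \<union> range RB"
proof (induction t)
  case 0 then show ?case by simp
next
  case (Suc t)
  then have "confS w t i \<in> {InB, Dead} \<union> range RB" by simp
  then show ?case by (auto split: msg.splits Msg.splits)
qed

lemma bcell_nacc: "w ! (i - 1) = InB \<Longrightarrow> \<not> isAcc (confS w t i)"
  using bcell[of w i t] by auto

lemma stepS_MD: "stepS (Sym MD) s = Dead"
  by (cases s) auto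

lemma dead_persist: "confS w t i = Dead \<Longrightarrow> confS w (t + j) i = Dead"
  by (induction j) auto

lemma dead_left: "confS w t (Suc i) = Dead \<Longrightarrow> Suc i \<le> length w \<Longrightarrow> confS w (Suc t) i = Dead"
  by (simp add: to_msg_def stepS_MD)

lemma dead_spread:
  assumes "confS w t k = Dead" "k \<le> length w"
  shows "j < k \<Longrightarrow> confS w (t + j) (k - j) = Dead"
proof (induction j)
  case 0 then show ?case using assms by simp
next
  case (Suc j)
  then have "confS w (t + j) (Suc (k - Suc j)) = Dead" by (simp add: Suc_diff_Suc)
  moreover have "Suc (k - Suc j) \<le> length w" using assms Suc by simp
  ultimately have "confS w (Suc (t + j)) (k - Suc j) = Dead" by (rule dead_left)
  then show ?case by simp
qed

fun hasE :: "St \<Rightarrow> bool" where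
  "hasE (RA l b c s en es acc) = (en \<or> acc)"
| "hasE (RB en) = en"
| "hasE _ = False"

lemma hasE_step: "hasE (stepS r s) \<Longrightarrow> r = Bnd \<or> (\<exists>c. r = Sym (MC c True))"
  by (cases s) (auto simp: raStep_def Let_def split: msg.splits Msg.splits)

lemma hasE_bl: "blS s = Some (MC c True) \<Longrightarrow> hasE s"
  by (cases s) (auto split: if_splits)

lemma end_time:
  assumes "set w \<subseteq> {InA, InB}"
  shows "1 \<le> i \<Longrightarrow> i \<le> length w \<Longrightarrow> hasE (confS w t i) \<Longrightarrow> length w + 1 \<le> t + i"
proof (induction t arbitrary: i)
  case 0
  then have "i - 1 < length w" by simp
  then have "w ! (i - 1) \<in> set w" by (rule nth_mem)
  then have "w ! (i - 1) \<in> {InA, InB}" using assms by blast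
  then have "w ! (i - 1) = InA \<or> w ! (i - 1) = InB" by simp
  then show ?case using 0 by (metis hasE.simps(3) hasE.simps(4) confS.simps(1))
next
  case (Suc t)
  let ?r = "if i = length w then (if t = 0 then Bnd else Bot) else to_msg (blS (confS w t (i + 1)))"
  have "hasE (stepS ?r (confS w t i))" using Suc.prems by simp
  then have r: "?r = Bnd \<or> (\<exists>c. ?r = Sym (MC c True))" by (rule hasE_step)
  show ?case
  proof (cases "i = length w")
    case True
    then show ?thesis using r by (auto split: if_splits)
  next
    case False
    then obtain c where "to_msg (blS (confS w t (i + 1))) = Sym (MC c True)" using r by (auto simp: to_msg_def split: option.splits)
    then have "blS (confS w t (i + 1)) = Some (MC c True)" by (auto simp: to_msg_def split: option.splits)
    then have "hasE (confS w t (i+1))" by (rule hasE_bl)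
    then have "length w + 1 \<le> t + (i + 1)" using Suc.IH[of "i+1"] Suc.prems False by simp
    then show ?thesis by simp
  qed
qed

lemma shape:
  "set w \<subseteq> {InA, InB} \<Longrightarrow> (\<forall>k. Suc k < length w \<longrightarrow> \<not> (w ! k = InB \<and> w ! Suc k = InA))
   \<Longrightarrow> \<exists>m N. w = replicate m InA @ replicate N InB"
proof (induction w)
  case Nil show ?case by (intro exI[of _ 0] exI[of _ 0]) simp
next
  case (Cons x w)
  have "\<forall>k. Suc k < length w \<longrightarrow> \<not> (w ! k = InB \<and> w ! Suc k = InA)"
  proof (intro allI impI)
    fix k assume "Suc k < length w"
    then show "\<not> (w ! k = InB \<and> w ! Suc k = InA)" using Cons.prems(2)[rule_format, of "Suc k"] by simp
  qed
  then obtain m N where w: "w = replicate m InA @ replicate N InB" using Cons by auto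
  show ?case
  proof (cases "x = InA")
    case True
    then show ?thesis using w by (intro exI[of _ "Suc m"] exI[of _ N]) simp
  next
    case False
    then have x: "x = InB" using Cons.prems by auto
    have "m = 0"
    proof (rule ccontr)
      assume "m \<noteq> 0"
      then have "w ! 0 = InA" "0 < length w" using w by (auto simp: nth_append)
      then show False using Cons.prems(2)[rule_format, of 0] x by simp
    qed
    then show ?thesis using w x by (intro exI[of _ 0] exI[of _ "Suc N"]) simp
  qed
qed

lemma invalid_nacc:
  assumes ws: "set w \<subseteq> {InA, InB}" and ne: "w \<noteq> []"
    and nv: "\<not> (\<exists>m N. m \<ge> 1 \<and> N \<ge> 1 \<and> w = replicate m InA @ replicate N InB)"
    and t: "t \<le> length w"
  shows "\<not> isAcc (confS w t 1)"
proof
  assume a: "isAcc (confS w t 1)"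
  let ?n = "length w"
  have "hasE (confS w t 1)" using a by (cases "confS w t 1") auto
  moreover have "1 \<le> ?n" using ne by (cases w) auto
  ultimately have tn: "t = ?n" using end_time[OF ws, of 1 t] t by auto
  have w0: "w ! 0 \<in> {InA, InB}" using ws ne by (meson nth_mem length_greater_0_conv subsetD)
  show False
  proof (cases "w ! 0 = InB")
    case True
    then show False using bcell_nacc[of w 1 t] a by simp
  next
    case False
    then have w0A: "w ! 0 = InA" using w0 by auto
    have "\<exists>k. 1 \<le> k \<and> k \<le> ?n \<and> confS w 1 k = Dead"
    proof (cases "\<exists>k. Suc k < ?n \<and> w ! k = InB \<and> w ! Suc k = InA")
      case True
      then obtain k where k: "Suc k < ?n" "w ! k = InB" "w ! Suc k = InA" by blast
      then have "confS w 1 (Suc k) = Dead" by (simp add: to_msg_def)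
      then show ?thesis using k by (intro exI[of _ "Suc k"]) simp
    next
      case False
      then obtain m N where w: "w = replicate m InA @ replicate N InB" using shape[OF ws] by blast
      have "m \<ge> 1" using w0A w ne by (cases m; cases N) (auto simp: nth_append)
      then have "N = 0"
      proof -
        assume "m \<ge> 1"
        show "N = 0"
        proof (rule ccontr)
          assume "N \<noteq> 0"
          then have "N \<ge> 1" by simp
          then show False using nv w \<open>m \<ge> 1\<close> by blast
        qed
      qed
      then have "w ! (?n - 1) = InA" using w ne by simp
      then have "confS w 1 ?n = Dead" by simp
      moreover have "1 \<le> ?n" using ne by (cases w) auto
      ultimately show ?thesis by (intro exI[of _ ?n]) auto
    qed
    then obtain k where k: "1 \<le> k" "k \<le> ?n" "confS w 1 k = Dead" by blast
    have "confS w (1 + (k - 1)) (k - (k - 1)) = Dead" using dead_spread[OF k(3) k(2), of "k - 1"] k by simp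
    then have "confS w k 1 = Dead" using k by simp
    then have "confS w (k + (?n - k)) 1 = Dead" by (rule dead_persist)
    then have "confS w t 1 = Dead" using tn k by simp
    then show False using a by simp
  qed
qed


lemma cout_card:
  assumes "1 \<le> c" "c \<le> m"
  shows "card {j. coutF (2^m) (m - c) j} \<le> 2^(c-1)"
proof -
  define d where "d = m - c"
  have "m = Suc d + (c - 1)" using assms unfolding d_def by simp
  then have md: "(2::nat)^m = 2^(Suc d) * 2^(c-1)" by (metis power_add)
  have "{j. coutF (2^m) (m - c) j} \<subseteq> (\<lambda>k. d + 2^(Suc d) * k) ` {1..2^(c-1)}"
  proof
    fix j assume "j \<in> {j. coutF (2^m) (m - c) j}"
    then have j: "d < j" "j \<le> 2^m + d" "2^(Suc d) dvd (j - d)" unfolding coutF_def d_def by auto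
    then obtain k where k: "j - d = 2^(Suc d) * k" by blast
    have "k \<ge> 1" using k j(1) by (cases k) auto
    moreover have "j - d \<le> 2^m" using j(2) by simp
    then have "2^(Suc d) * k \<le> 2^(Suc d) * 2^(c-1)" using k md by simp
    then have "k \<le> 2^(c-1)" by simp
    ultimately show "j \<in> (\<lambda>k. d + 2^(Suc d) * k) ` {1..2^(c-1)}"
      using k j(1) by (intro image_eqI[of _ _ k]) auto
  qed
  then have "card {j. coutF (2^m) (m - c) j} \<le> card ((\<lambda>k. d + 2^(Suc d) * k) ` {1..2^(c-1)})"
    by (intro card_mono) auto
  also have "\<dots> \<le> card {1..(2::nat)^(c-1)}" by (rule card_image_le) simp
  finally show ?thesis by simp
qed

lemma cell_comm:
  assumes m: "m \<ge> 1" and c: "2 \<le> c" "c \<le> m + 2^m"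
  shows "card {j. j < m + 2^m \<and> blS (confS (replicate m InA @ replicate (2^m) InB) j c) \<noteq> None}
    \<le> 2 + (if c \<le> m then 2^(c-1) else 0)"
proof -
  let ?w = "replicate m InA @ replicate (2^m) InB"
  let ?n = "m + 2^m"
  let ?S = "{j. j < ?n \<and> blS (confS ?w j c) \<noteq> None}"
  have N: "(2::nat)^m \<ge> 1" by simp
  have sub: "?S \<subseteq> {0, ?n + 1 - c} \<union> {j. c \<le> m \<and> coutF (2^m) (m - c) j}"
  proof
    fix j assume j: "j \<in> ?S"
    show "j \<in> {0, ?n + 1 - c} \<union> {j. c \<le> m \<and> coutF (2^m) (m - c) j}"
    proof (cases j)
      case 0 then show ?thesis by simp
    next
      case (Suc j')
      have "confS ?w j c = ideal m (2^m) j c" using conf_ideal[OF m N, of c j'] c Suc by simp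
      then have "blS (ideal m (2^m) j c) \<noteq> None" using j by simp
      then show ?thesis unfolding ideal_def by (auto split: if_splits)
    qed
  qed
  have "card ?S \<le> card ({0, ?n + 1 - c} \<union> {j. c \<le> m \<and> coutF (2^m) (m - c) j})"
  proof (rule card_mono[OF _ sub])
    have "{j. c \<le> m \<and> coutF (2^m) (m - c) j} \<subseteq> {..2^m + m}" unfolding coutF_def by auto
    then show "finite ({0, ?n + 1 - c} \<union> {j. c \<le> m \<and> coutF (2^m) (m - c) j})"
      using finite_subset by blast
  qed
  also have "\<dots> \<le> card {0, ?n + 1 - c} + card {j. c \<le> m \<and> coutF (2^m) (m - c) j}"
    by (rule card_Un_le)
  also have "\<dots> \<le> 2 + (if c \<le> m then 2^(c-1) else 0)"
  proof -
    have "card {0, ?n + 1 - c} \<le> 2" by (simp add: card_insert_le_m1)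
    moreover have "card {j. c \<le> m \<and> coutF (2^m) (m - c) j} \<le> (if c \<le> m then 2^(c-1) else 0)"
      using cout_card[of c m] c by auto
    ultimately show ?thesis by simp
  qed
  finally show ?thesis .
qed

lemma geo: "(\<Sum>i<m. (2::nat)^i) < 2^m"
  by (induction m) auto

lemma total_comm:
  assumes m: "m \<ge> 1"
  shows "(\<Sum>i=1..m + 2^m - 1. card {j. j < m + 2^m \<and> blS (confS (replicate m InA @ replicate (2^m) InB) j (i+1)) \<noteq> None})
     \<le> 3 * (m + 2^m)"
proof -
  let ?n = "m + 2^m"
  define f :: "nat \<Rightarrow> nat" where "f i = (if i < m then 2^i else 0)" for i
  have "(\<Sum>i=1..?n - 1. card {j. j < ?n \<and> blS (confS (replicate m InA @ replicate (2^m) InB) j (i+1)) \<noteq> None})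
      \<le> (\<Sum>i=1..?n - 1. 2 + f i)"
  proof (rule sum_mono)
    fix i assume "i \<in> {1..?n - 1}"
    then have "2 \<le> i + 1" "i + 1 \<le> ?n" by auto
    from cell_comm[OF m this] show "card {j. j < ?n \<and> blS (confS (replicate m InA @ replicate (2^m) InB) j (i+1)) \<noteq> None} \<le> 2 + f i"
      unfolding f_def by auto
  qed
  also have "\<dots> = 2 * (?n - 1) + (\<Sum>i=1..?n - 1. f i)" unfolding sum.distrib by simp
  also have "(\<Sum>i=1..?n - 1. f i) \<le> (\<Sum>i<?n. f i)" by (rule sum_mono2) auto
  also have "(\<Sum>i<?n. f i) = (\<Sum>i\<in>{i\<in>{..<?n}. i < m}. 2^i)"
    unfolding f_def using sum.inter_filter[of "{..<?n}" "\<lambda>i. (2::nat)^i" "\<lambda>i. i < m"] by simp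
  also have "{i\<in>{..<?n}. i < m} = {..<m}" by auto
  also have "(\<Sum>i<m. (2::nat)^i) \<le> 2^m" using geo[of m] by simp
  finally show ?thesis by simp
qed


instance Msg :: countable by countable_datatype
instance St :: countable by countable_datatype

lemma finite_St: "finite (UNIV :: St set)"
proof -
  have "(UNIV :: St set) \<subseteq> {InA, InB, Dead} \<union> range (\<lambda>(l,b,c,s,en,es,acc). RA l b c s en es acc) \<union> range RB"
  proof
    fix x :: St show "x \<in> {InA, InB, Dead} \<union> range (\<lambda>(l,b,c,s,en,es,acc). RA l b c s en es acc) \<union> range RB"
      by (cases x) (auto simp: image_iff)
  qed
  then show ?thesis by (rule finite_subset) auto
qed

lemma finite_Msg: "finite (UNIV :: Msg set)"
proof -
  have "(UNIV :: Msg set) \<subseteq> {LA, LB, MD} \<union> range (\<lambda>(c,e). MC c e)"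
  proof
    fix x :: Msg show "x \<in> {LA, LB, MD} \<union> range (\<lambda>(c,e). MC c e)"
      by (cases x) (auto simp: image_iff)
  qed
  then show ?thesis by (rule finite_subset) auto
qed

fun decmsg :: "nat msg \<Rightarrow> Msg msg" where
  "decmsg (Sym k) = Sym (from_nat k)"
| "decmsg Bnd = Bnd"
| "decmsg Bot = Bot"

definition Mnat :: "(nat, nat) ca" where
  "Mnat = \<lparr> states = range (to_nat :: St \<Rightarrow> nat), accepting = to_nat ` {s :: St. isAcc s},
     inputs = {to_nat InA, to_nat InB}, comms = range (to_nat :: Msg \<Rightarrow> nat),
     bl = (\<lambda>s. map_option to_nat (blS (from_nat s))), br = (\<lambda>_. None),
     delta = (\<lambda>x s y. to_nat (stepS (decmsg y) (from_nat s))) \<rparr>"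

lemma decmsg_to_msg: "decmsg (to_msg (map_option (to_nat :: Msg \<Rightarrow> nat) o')) = to_msg o'"
  by (cases o') (simp_all add: to_msg_def)

lemma sim:
  "1 \<le> i \<Longrightarrow> i \<le> length w \<Longrightarrow> oca_conf Mnat (map to_nat w) t i = to_nat (confS w t i)"
proof (induction t arbitrary: i)
  case 0 then show ?case by simp
next
  case (Suc t)
  show ?case
  proof (cases "i = length w")
    case True
    then show ?thesis using Suc by (simp add: Mnat_def)
  next
    case False
    then have "oca_conf Mnat (map to_nat w) t (i+1) = to_nat (confS w t (i+1))" using Suc by simp
    then show ?thesis using Suc False by (simp add: Mnat_def decmsg_to_msg)
  qed
qed

lemma mo_range: "map_option (to_nat :: Msg \<Rightarrow> nat) o' \<in> Some ` range (to_nat :: Msg \<Rightarrow> nat) \<union> {None}"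
  by (cases o') auto

lemma wf: "is_oca Mnat"
  unfolding is_oca_def wf_ca_def Mnat_def valid_msg_def
  using finite_St finite_Msg mo_range by auto

lemma bl_Mnat: "bl Mnat (to_nat s) = map_option to_nat (blS s)"
  by (simp add: Mnat_def)

lemma br_Mnat: "br Mnat s = None"
  by (simp add: Mnat_def)

lemma lang: "rt_lang Mnat = {replicate m (to_nat InA) @ replicate (2 ^ m) (to_nat InB) | m. m \<ge> 1}"
proof (intro set_eqI iffI)
  fix w assume "w \<in> rt_lang Mnat"
  then have ne: "w \<noteq> []" and ws: "set w \<subseteq> {to_nat InA, to_nat InB}"
    and ex: "\<exists>t\<le>length w. oca_conf Mnat w t 1 \<in> to_nat ` {s. isAcc s}"
    unfolding rt_lang_def by (auto simp: Mnat_def)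
  define w' :: "St list" where "w' = map from_nat w"
  have ww: "map to_nat w' = w" unfolding w'_def using ws by (induction w) auto
  have ws': "set w' \<subseteq> {InA, InB}" unfolding w'_def using ws by auto
  have ne': "w' \<noteq> []" using ne w'_def by simp
  obtain t where t: "t \<le> length w'" "isAcc (confS w' t 1)"
  proof -
    obtain t where t: "t \<le> length w" "oca_conf Mnat w t 1 \<in> to_nat ` {s. isAcc s}" using ex by blast
    have "oca_conf Mnat w t 1 = to_nat (confS w' t 1)" using sim[of 1 w' t] ww ne' by (cases w') auto
    then have "isAcc (confS w' t 1)" using t(2) by (auto dest: injD[OF inj_to_nat])
    then show ?thesis using that t(1) ww by auto
  qed
  then obtain m N where mN: "m \<ge> 1" "N \<ge> 1" "w' = replicate m InA @ replicate N InB"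
    using invalid_nacc[OF ws' ne'] by blast
  then have "N = 2^m" using valid_acc[OF mN(1,2)] t by auto
  then show "w \<in> {replicate m (to_nat InA) @ replicate (2 ^ m) (to_nat InB) | m. m \<ge> 1}"
    using ww mN by auto
next
  fix w assume "w \<in> {replicate m (to_nat InA) @ replicate (2 ^ m) (to_nat InB) | m. m \<ge> 1}"
  then obtain m where m: "m \<ge> 1" and w: "w = replicate m (to_nat InA) @ replicate (2 ^ m) (to_nat InB)" by auto
  define w' where "w' = replicate m InA @ replicate (2^m) InB"
  have ww: "w = map to_nat w'" unfolding w w'_def by simp
  obtain t where t: "t \<le> m + 2^m" "isAcc (confS w' t 1)"
    using valid_acc[OF m, of "2^m"] unfolding w'_def by auto
  have "oca_conf Mnat w t 1 = to_nat (confS w' t 1)" unfolding ww using sim[of 1 w' t] m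
    unfolding w'_def by simp
  then show "w \<in> rt_lang Mnat" unfolding rt_lang_def using t m
    by (auto simp: Mnat_def w w'_def)
qed

lemma scom_bound:
  assumes "w \<in> rt_lang Mnat"
  shows "real (scom_rt Mnat w) \<le> 3 * real (length w)"
proof -
  obtain m where m: "m \<ge> 1" and w: "w = replicate m (to_nat InA) @ replicate (2 ^ m) (to_nat InB)"
    using assms lang by auto
  define w' where "w' = replicate m InA @ replicate (2^m) InB"
  have ww: "w = map to_nat w'" unfolding w w'_def by simp
  have len: "length w = m + 2^m" unfolding w by simp
  have "scom_rt Mnat w = (\<Sum>i=1..m + 2^m - 1. card {j. j < m + 2^m \<and> blS (confS w' j (i+1)) \<noteq> None})"
    unfolding scom_rt_def com_def len
  proof (rule sum.cong[OF refl])
    fix i assume i: "i \<in> {1..m + 2^m - 1}"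
    have "\<And>j. oca_conf Mnat w j (i+1) = to_nat (confS w' j (i+1))"
    proof -
      fix j
      have iw: "1 \<le> i + 1" "i + 1 \<le> length w'" using i m unfolding w'_def by auto
      show "oca_conf Mnat w j (i+1) = to_nat (confS w' j (i+1))"
        unfolding ww by (rule sim[OF iw])
    qed
    then have "\<And>j. bl Mnat (oca_conf Mnat w j (i+1)) = map_option to_nat (blS (confS w' j (i+1)))"
      by (simp add: bl_Mnat)
    then show "card {j. j < m + 2^m \<and> (br Mnat (oca_conf Mnat w j i) \<noteq> None \<or> bl Mnat (oca_conf Mnat w j (i + 1)) \<noteq> None)}
      = card {j. j < m + 2^m \<and> blS (confS w' j (i+1)) \<noteq> None}"
      by (simp add: br_Mnat)
  qed
  also have "\<dots> \<le> 3 * (m + 2^m)" using total_comm[OF m] unfolding w'_def by simp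
  finally have h: "scom_rt Mnat w \<le> 3 * length w" unfolding len .
  then have "real (scom_rt Mnat w) \<le> real (3 * length w)" by (simp only: of_nat_le_iff)
  then show ?thesis by simp
qed

theorem mainTheorem7:
  shows "\<exists>(M :: (nat, nat) ca) a b. a \<noteq> b \<and> inputs M = {a, b} \<and>
           rt_SC_OCA (\<lambda>n. real n) M \<and>
           rt_lang M = {replicate m a @ replicate (2 ^ m) b | m. m \<ge> 1}"
proof (intro exI conjI)
  show "to_nat InA \<noteq> to_nat InB" by simp
  show "inputs Mnat = {to_nat InA, to_nat InB}" by (simp add: Mnat_def)
  show "rt_lang Mnat = {replicate m (to_nat InA) @ replicate (2 ^ m) (to_nat InB) | m. m \<ge> 1}"
    by (rule lang)
  show "rt_SC_OCA (\<lambda>n. real n) Mnat"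
    unfolding rt_SC_OCA_def
  proof (intro conjI exI)
    show "is_oca Mnat" by (rule wf)
    show "(\<lambda>n. 3 * real n) \<in> O(\<lambda>n. real n)" by (intro bigoI[of _ 3]) simp
    show "\<forall>w\<in>rt_lang Mnat. real (scom_rt Mnat w) \<le> 3 * real (length w)"
      using scom_bound by blast
  qed
qed

end
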